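(* Let $G$ be a group, $S$ a subgroup of $G$, and $T,U$ subsets of $G$. (i) If $(S,T,U)$ is a basic TPP triple of $G$, then $T$ and $U$ are subtransversals for $S$ in $G$ (with respect to the partition of $G$ into right cosets $S\backslash G$) such that $\operatorname{supp}_{S\backslash G}(T)\cap \operatorname{supp}_{S\backslash G}(U)=\{S\}$. (ii) If $T$ and $U$ are also subgroups of $G$, and $T$ and $U$ are subtransversals for $S$ in $G$ satisfying $\operatorname{supp}_{S\backslash G}(T)\cap \operatorname{supp}_{S\backslash G}(U)=\{S\}$, then $(S,T,U)$ is a TPP triple of $G$.
   Context: For a nonempty subset $X$ of a group $G$, $Q(X):=\{xy^{-1}: x,y\in X\}$. Nonempty subsets $S,T,U$ of $G$ form a TPP triple if for all $s\in Q(S)$, $t\in Q(T)$, $u\in Q(U)$: $stu=1$ iff $s=t=u=1$. A TPP triple is basic if $1\in S\cap T\cap U$. Let $C$ be a finite nonempty set and $\mathcal C$ a partition of $C$. A set $X\subseteq C$ is a subtransversal for $\mathcal C$ with support $\operatorname{supp}_{\mathcal C}(X)=\mathcal T\subseteq\mathcal C$ if for every block $C_i\in\mathcal C$, $|X\cap C_i|=1$ when $C_i\in\mathcal T$ and $|X\cap C_i|=0$ otherwise. For a subgroup $S$ of $G$, a subtransversal for $S$ in $G$ means a subtransversal for the partition $S\backslash G=\{Sr: r\in G\}$ of $G$ into right cosets of $S$. *)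

theory Defs
  imports "HOL-Algebra.Coset"
begin

definition quot_set :: "('a, 'b) monoid_scheme \<Rightarrow> 'a set \<Rightarrow> 'a set" where
  "quot_set G X = {x \<otimes>\<^bsub>G\<^esub> inv\<^bsub>G\<^esub> y | x y. x \<in> X \<and> y \<in> X}"

definition TPP_triple :: "('a, 'b) monoid_scheme \<Rightarrow> 'a set \<Rightarrow> 'a set \<Rightarrow> 'a set \<Rightarrow> bool" where
  "TPP_triple G S T U \<longleftrightarrow>
     S \<subseteq> carrier G \<and> T \<subseteq> carrier G \<and> U \<subseteq> carrier G \<and>
     S \<noteq> {} \<and> T \<noteq> {} \<and> U \<noteq> {} \<and>
     (\<forall>s \<in> quot_set G S. \<forall>t \<in> quot_set G T. \<forall>u \<in> quot_set G U.
        (s \<otimes>\<^bsub>G\<^esub> t \<otimes>\<^bsub>G\<^esub> u = \<one>\<^bsub>G\<^esub>) \<longleftrightarrow>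
        (s = \<one>\<^bsub>G\<^esub> \<and> t = \<one>\<^bsub>G\<^esub> \<and> u = \<one>\<^bsub>G\<^esub>))"

definition basic_TPP_triple :: "('a, 'b) monoid_scheme \<Rightarrow> 'a set \<Rightarrow> 'a set \<Rightarrow> 'a set \<Rightarrow> bool" where
  "basic_TPP_triple G S T U \<longleftrightarrow> TPP_triple G S T U \<and> \<one>\<^bsub>G\<^esub> \<in> S \<inter> T \<inter> U"

definition subtransversal_with_support :: "'a set set \<Rightarrow> 'a set \<Rightarrow> 'a set set \<Rightarrow> bool" where
  "subtransversal_with_support P X Ts \<longleftrightarrow>
     X \<subseteq> \<Union>P \<and> Ts \<subseteq> P \<and>
     (\<forall>B \<in> P. (B \<in> Ts \<longrightarrow> (\<exists>!x. x \<in> X \<inter> B)) \<and> (B \<notin> Ts \<longrightarrow> X \<inter> B = {}))"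

definition subtransversal :: "'a set set \<Rightarrow> 'a set \<Rightarrow> bool" where
  "subtransversal P X \<longleftrightarrow> (\<exists>Ts. subtransversal_with_support P X Ts)"

text \<open>The support (uniquely determined when X is a subtransversal).\<close>
definition supp :: "'a set set \<Rightarrow> 'a set \<Rightarrow> 'a set set" where
  "supp P X = (THE Ts. subtransversal_with_support P X Ts)"

end

theory Submission
  imports Defs
begin

lemma stws_supp_eq:
  assumes "subtransversal_with_support P X Ts"
  shows "Ts = {B\<in>P. X \<inter> B \<noteq> {}}"
proof (intro equalityI subsetI)
  have d: "Ts \<subseteq> P" "\<And>B. B \<in> P \<Longrightarrow> B \<in> Ts \<Longrightarrow> \<exists>!x. x \<in> X \<inter> B"
    "\<And>B. B \<in> P \<Longrightarrow> B \<notin> Ts \<Longrightarrow> X \<inter> B = {}"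
    using assms unfolding subtransversal_with_support_def by auto
  fix B
  { assume "B \<in> Ts"
    then show "B \<in> {B\<in>P. X \<inter> B \<noteq> {}}" using d(1) d(2)[of B] by auto }
  { assume "B \<in> {B\<in>P. X \<inter> B \<noteq> {}}"
    then show "B \<in> Ts" using d(3)[of B] by auto }
qed

lemma supp_eq:
  assumes "subtransversal P X"
  shows "supp P X = {B\<in>P. X \<inter> B \<noteq> {}}"
proof -
  obtain Ts where Ts: "subtransversal_with_support P X Ts"
    using assms unfolding subtransversal_def by blast
  have "supp P X = Ts" unfolding supp_def
  proof (rule the_equality)
    show "subtransversal_with_support P X Ts" by (rule Ts)
  next
    fix Ts' assume "subtransversal_with_support P X Ts'"
    then show "Ts' = Ts" using Ts stws_supp_eq by blast
  qed
  thus ?thesis using stws_supp_eq[OF Ts] by simp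
qed

lemma st_unique:
  assumes "subtransversal P X" "B \<in> P" "x \<in> X" "x \<in> B" "y \<in> X" "y \<in> B"
  shows "x = y"
proof -
  obtain Ts where Ts: "subtransversal_with_support P X Ts" using assms(1) unfolding subtransversal_def by auto
  have "B \<in> Ts" using stws_supp_eq[OF Ts] assms by auto
  then have "\<exists>!x. x \<in> X \<inter> B" using Ts assms(2) unfolding subtransversal_with_support_def by auto
  then show ?thesis using assms(3-6) by auto
qed

lemma st_intro:
  assumes "X \<subseteq> \<Union>P" "\<And>B x y. B \<in> P \<Longrightarrow> x \<in> X \<Longrightarrow> x \<in> B \<Longrightarrow> y \<in> X \<Longrightarrow> y \<in> B \<Longrightarrow> x = y"
  shows "subtransversal P X"
  unfolding subtransversal_def
proof (rule exI[of _ "{B\<in>P. X \<inter> B \<noteq> {}}"])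
  show "subtransversal_with_support P X {B \<in> P. X \<inter> B \<noteq> {}}"
    unfolding subtransversal_with_support_def
  proof (intro conjI ballI impI)
    fix B assume "B \<in> P" "B \<in> {B \<in> P. X \<inter> B \<noteq> {}}"
    then obtain x where "x \<in> X \<inter> B" by blast
    then show "\<exists>!x. x \<in> X \<inter> B" using assms(2) \<open>B \<in> P\<close> by blast
  qed (use assms(1) in blast)+
qed

lemma quot_set_subgroup:
  fixes G (structure)
  assumes "group G" "subgroup H G"
  shows "quot_set G H = H"
proof -
  interpret group G by fact
  show ?thesis unfolding quot_set_def
  proof (auto simp: assms(2) subgroup.m_closed subgroup.m_inv_closed)
    fix x assume "x \<in> H"
    then show "\<exists>a b. x = a \<otimes> inv b \<and> a \<in> H \<and> b \<in> H"
      by (rule_tac x=x in exI, rule_tac x="\<one>" in exI)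
         (simp add: assms(2) subgroup.one_closed subgroup.mem_carrier[OF assms(2)])
  qed
qed

lemma in_quot: "a \<in> X \<Longrightarrow> b \<in> X \<Longrightarrow> a \<otimes>\<^bsub>G\<^esub> inv\<^bsub>G\<^esub> b \<in> quot_set G X"
  unfolding quot_set_def by blast

lemma (in group) cancel3: "x \<in> carrier G \<Longrightarrow> y \<in> carrier G \<Longrightarrow> y \<otimes> inv x \<otimes> (x \<otimes> inv y) = \<one>"
proof -
  assume a: "x \<in> carrier G" "y \<in> carrier G"
  then have "y \<otimes> inv x = inv (x \<otimes> inv y)" by (simp add: inv_mult_group)
  then show ?thesis using a by simp
qed

lemma same_coset:
  fixes G (structure)
  assumes "group G" "subgroup S G" "B \<in> rcosets S" "x \<in> B" "y \<in> B" "x \<in> carrier G" "y \<in> carrier G"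
  shows "x \<otimes> inv y \<in> S"
proof -
  interpret group G by fact
  interpret sS: subgroup S G by fact
  obtain a where a: "a \<in> carrier G" "B = S #> a" using assms(3) unfolding RCOSETS_def by blast
  have ya: "y \<in> S #> a" and xa: "x \<in> S #> a" using assms(4,5) a(2) by auto
  have "S #> a = S #> y" by (rule repr_independence[OF ya a(1) assms(2)])
  then have "x \<in> S #> y" using xa by (rule subst)
  then show ?thesis by (rule sS.rcos_module_imp[OF assms(1) assms(7)])
qed

theorem mainTheorem2:
  fixes G (structure) and S T U :: "'a set"
  assumes "group G" and "subgroup S G"
    and "T \<subseteq> carrier G" and "U \<subseteq> carrier G"
  shows "(basic_TPP_triple G S T U \<longrightarrow>
            subtransversal (rcosets S) T \<and> subtransversal (rcosets S) U \<and>
            supp (rcosets S) T \<inter> supp (rcosets S) U = {S})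
       \<and> (subgroup T G \<and> subgroup U G \<and>
            subtransversal (rcosets S) T \<and> subtransversal (rcosets S) U \<and>
            supp (rcosets S) T \<inter> supp (rcosets S) U = {S}
          \<longrightarrow> TPP_triple G S T U)"
proof (rule conjI)
  interpret group G by fact
  interpret sS: subgroup S G by fact
  have Scar: "S \<subseteq> carrier G" by (rule sS.subset)
  have part: "\<Union>(rcosets S) = carrier G" by (rule rcosets_part_G[OF assms(2)])
  have SinR: "S \<in> rcosets S"
    using rcosetsI[OF Scar one_closed] coset_mult_one[OF Scar] by simp
  have QS: "quot_set G S = S" by (rule quot_set_subgroup[OF assms(1,2)])
  have same: "x \<otimes> inv y \<in> S" if "B \<in> rcosets S" "x \<in> B" "y \<in> B" "x \<in> carrier G" "y \<in> carrier G" for B x y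
    using same_coset[OF assms(1,2) that] .
  show "basic_TPP_triple G S T U \<longrightarrow>
            subtransversal (rcosets S) T \<and> subtransversal (rcosets S) U \<and>
            supp (rcosets S) T \<inter> supp (rcosets S) U = {S}"
  proof
    assume b: "basic_TPP_triple G S T U"
    have tpp: "\<And>s t u. s \<in> quot_set G S \<Longrightarrow> t \<in> quot_set G T \<Longrightarrow> u \<in> quot_set G U \<Longrightarrow>
        s \<otimes> t \<otimes> u = \<one> \<Longrightarrow> s = \<one> \<and> t = \<one> \<and> u = \<one>"
      using b unfolding basic_TPP_triple_def TPP_triple_def by blast
    have oneT: "\<one> \<in> T" and oneU: "\<one> \<in> U" using b unfolding basic_TPP_triple_def by auto
    have stT: "subtransversal (rcosets S) T"
    proof (rule st_intro)
      show "T \<subseteq> \<Union> (rcosets S)" using part assms(3) by simp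
    next
      fix B x y assume h: "B \<in> rcosets S" "x \<in> T" "x \<in> B" "y \<in> T" "y \<in> B"
      have xc: "x \<in> carrier G" and yc: "y \<in> carrier G" using h assms(3) by auto
      have "y \<otimes> inv x \<in> S" using same[OF h(1) h(5) h(3) yc xc] .
      then have s: "y \<otimes> inv x \<in> quot_set G S" using QS by simp
      have t: "x \<otimes> inv y \<in> quot_set G T" by (rule in_quot[OF h(2) h(4)])
      have u: "\<one> \<in> quot_set G U" using in_quot[OF oneU oneU, of G] by simp
      have "y \<otimes> inv x \<otimes> (x \<otimes> inv y) \<otimes> \<one> = \<one>"
        using xc yc cancel3 by simp
      then have "x \<otimes> inv y = \<one>" using tpp[OF s t u] by blast
      moreover have "x = x \<otimes> inv y \<otimes> y" using xc yc by (simp add: m_assoc)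
      ultimately show "x = y" using yc by simp
    qed
    have stU: "subtransversal (rcosets S) U"
    proof (rule st_intro)
      show "U \<subseteq> \<Union> (rcosets S)" using part assms(4) by simp
    next
      fix B x y assume h: "B \<in> rcosets S" "x \<in> U" "x \<in> B" "y \<in> U" "y \<in> B"
      have xc: "x \<in> carrier G" and yc: "y \<in> carrier G" using h assms(4) by auto
      have "y \<otimes> inv x \<in> S" using same[OF h(1) h(5) h(3) yc xc] .
      then have s: "y \<otimes> inv x \<in> quot_set G S" using QS by simp
      have u: "x \<otimes> inv y \<in> quot_set G U" by (rule in_quot[OF h(2) h(4)])
      have t: "\<one> \<in> quot_set G T" using in_quot[OF oneT oneT, of G] by simp
      have "y \<otimes> inv x \<otimes> \<one> \<otimes> (x \<otimes> inv y) = \<one>"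
        using xc yc cancel3 by simp
      then have "x \<otimes> inv y = \<one>" using tpp[OF s t u] by blast
      moreover have "x = x \<otimes> inv y \<otimes> y" using xc yc by (simp add: m_assoc)
      ultimately show "x = y" using yc by simp
    qed
    have "supp (rcosets S) T \<inter> supp (rcosets S) U = {S}"
    proof -
      have "{B \<in> rcosets S. T \<inter> B \<noteq> {}} \<inter> {B \<in> rcosets S. U \<inter> B \<noteq> {}} = {S}"
      proof (intro equalityI subsetI)
        fix B assume "B \<in> {B \<in> rcosets S. T \<inter> B \<noteq> {}} \<inter> {B \<in> rcosets S. U \<inter> B \<noteq> {}}"
        then obtain t u where h: "B \<in> rcosets S" "t \<in> T" "t \<in> B" "u \<in> U" "u \<in> B" by blast
        have tc: "t \<in> carrier G" and uc: "u \<in> carrier G" using h assms by auto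
        have "u \<otimes> inv t \<in> S" using same[OF h(1) h(5) h(3) uc tc] .
        then have s: "(u \<otimes> inv t) \<otimes> inv \<one> \<in> quot_set G S" using QS by simp
        have t: "t \<otimes> inv \<one> \<in> quot_set G T" by (rule in_quot[OF h(2) oneT])
        have u: "\<one> \<otimes> inv u \<in> quot_set G U" by (rule in_quot[OF oneU h(4)])
        have "(u \<otimes> inv t) \<otimes> inv \<one> \<otimes> (t \<otimes> inv \<one>) \<otimes> (\<one> \<otimes> inv u) = \<one>"
          proof -
          have "u \<otimes> inv t \<otimes> t = u" using tc uc by (simp add: m_assoc)
          then show ?thesis using tc uc by simp
        qed
        then have "t \<otimes> inv \<one> = \<one>" using tpp[OF s t u] by blast
        then have t1: "t = \<one>" using tc by simp
        obtain a where a: "a \<in> carrier G" "B = S #> a" using h(1) unfolding RCOSETS_def by blast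
        have "S #> a = S #> \<one>" using repr_independence[OF _ a(1) assms(2)] h(3) a t1 by simp
        then show "B \<in> {S}" using a coset_mult_one[OF Scar] by simp
      next
        fix B assume "B \<in> {S}"
        then show "B \<in> {B \<in> rcosets S. T \<inter> B \<noteq> {}} \<inter> {B \<in> rcosets S. U \<inter> B \<noteq> {}}"
          using SinR oneT oneU sS.one_closed by auto
      qed
      then show ?thesis using supp_eq[OF stT] supp_eq[OF stU] by simp
    qed
    then show "subtransversal (rcosets S) T \<and> subtransversal (rcosets S) U \<and>
            supp (rcosets S) T \<inter> supp (rcosets S) U = {S}" using stT stU by blast
  qed
  show "subgroup T G \<and> subgroup U G \<and>
            subtransversal (rcosets S) T \<and> subtransversal (rcosets S) U \<and>
            supp (rcosets S) T \<inter> supp (rcosets S) U = {S}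
          \<longrightarrow> TPP_triple G S T U"
  proof
    assume h: "subgroup T G \<and> subgroup U G \<and>
            subtransversal (rcosets S) T \<and> subtransversal (rcosets S) U \<and>
            supp (rcosets S) T \<inter> supp (rcosets S) U = {S}"
    then have sT: "subgroup T G" and sU: "subgroup U G" and stT: "subtransversal (rcosets S) T"
      and stU: "subtransversal (rcosets S) U"
      and int: "supp (rcosets S) T \<inter> supp (rcosets S) U = {S}" by simp_all
    have QT: "quot_set G T = T" by (rule quot_set_subgroup[OF assms(1) sT])
    have QU: "quot_set G U = U" by (rule quot_set_subgroup[OF assms(1) sU])
    have key: "s = \<one> \<and> t = \<one> \<and> u = \<one>" if st: "s \<in> S" "t \<in> T" "u \<in> U" "s \<otimes> t \<otimes> u = \<one>" for s t u
    proof -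
      have sc: "s \<in> carrier G" and tc: "t \<in> carrier G" and uc: "u \<in> carrier G"
        using st assms sT sU subgroup.subset by blast+
      have "s \<otimes> (t \<otimes> u) = \<one>" using st(4) sc tc uc by (simp add: m_assoc)
      then have "t \<otimes> u = inv s \<otimes> \<one>" using sc tc uc inv_solve_left[of "t \<otimes> u" s "\<one>"] by simp
      then have "t \<otimes> u = inv s" using sc by simp
      then have "t \<otimes> inv (inv u) \<in> S" using uc st(1) by simp
      then have tin: "t \<in> S #> inv u" using sS.rcos_module_rev[OF assms(1) _ tc] uc by simp
      have uin: "inv u \<in> S #> inv u" using rcos_self[OF _ assms(2)] uc by simp
      have B: "S #> inv u \<in> rcosets S" using rcosetsI[OF Scar] uc by simp
      have iuU: "inv u \<in> U" by (rule subgroup.m_inv_closed[OF sU st(3)])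
      have "S #> inv u \<in> supp (rcosets S) T \<inter> supp (rcosets S) U"
        unfolding supp_eq[OF stT] supp_eq[OF stU] using B tin uin st(2) iuU by blast
      then have BS: "S #> inv u = S" using int by blast
      have t1: "t = \<one>" using st_unique[OF stT SinR st(2) _ subgroup.one_closed[OF sT] sS.one_closed]
        tin BS by simp
      have "inv u = \<one>" using st_unique[OF stU SinR iuU _ subgroup.one_closed[OF sU] sS.one_closed]
        uin BS by simp
      then have u1: "u = \<one>" using uc inv_inv[OF uc] by simp
      then have "s = \<one>" using st(4) t1 sc by simp
      then show ?thesis using t1 u1 by simp
    qed
    show "TPP_triple G S T U"
      unfolding TPP_triple_def QS QT QU
    proof (intro conjI ballI)
      show "S \<noteq> {}" using sS.one_closed by blast
      show "T \<noteq> {}" using subgroup.one_closed[OF sT] by blast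
      show "U \<noteq> {}" using subgroup.one_closed[OF sU] by blast
      show "S \<subseteq> carrier G" "T \<subseteq> carrier G" "U \<subseteq> carrier G" using Scar assms(3,4) by auto
      fix s t u assume "s \<in> S" "t \<in> T" "u \<in> U"
      show "s \<otimes> t \<otimes> u = \<one> \<longleftrightarrow> s = \<one> \<and> t = \<one> \<and> u = \<one>"
      proof
        assume "s \<otimes> t \<otimes> u = \<one>"
        then show "s = \<one> \<and> t = \<one> \<and> u = \<one>" using key \<open>s \<in> S\<close> \<open>t \<in> T\<close> \<open>u \<in> U\<close> by blast
      next
        assume "s = \<one> \<and> t = \<one> \<and> u = \<one>"
        then show "s \<otimes> t \<otimes> u = \<one>" by simp
      qed
    qed
  qed
qed

end
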